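(* Let $x:[0,1]\to\mathbb{R}$ be càdlàg and $0\le s<t\le1$. Define $\beta=\sup_{s\le u<v<w\le t}H(x(u),x(v),x(w))$. If $\eta>2\beta$, then \[N_\eta(x;[s,t])\le\frac{|x(t)-x(s)|+\beta}{\eta-\beta}.\]
   Context: $H(a,b,c)=(a\wedge c-a\wedge c\wedge b)\vee(a\vee c\vee b-a\vee c)$ is the distance from $b$ to the interval with endpoints $a$ and $c$. For $\eta>0$, $N_\eta(x;[s,t])$ (the number of $\eta$-oscillations of $x$ in $[s,t]$) is the largest integer $N$ for which there exist points $s\le t_1<t_2\le t_3<t_4\le\dots\le t_{2N-1}<t_{2N}\le t$ with $|x(t_{2k})-x(t_{2k-1})|>\eta$ for all $k=1,\dots,N$ (and $0$ if there are no such points). *)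

theory Defs
  imports "HOL-Analysis.Analysis" "HOL-Library.Extended_Nat"
begin

definition cadlag01 :: "(real \<Rightarrow> real) \<Rightarrow> bool" where
  "cadlag01 x \<longleftrightarrow>
     (\<forall>t\<in>{0..<1}. (x \<longlongrightarrow> x t) (at_right t)) \<and>
     (\<forall>t\<in>{0<..1}. \<exists>l. (x \<longlongrightarrow> l) (at_left t))"

text \<open>Distance from b to the interval with endpoints a and c.\<close>
definition H :: "real \<Rightarrow> real \<Rightarrow> real \<Rightarrow> real" where
  "H a b c = max (min a c - min (min a c) b) (max (max a c) b - max a c)"

text \<open>Admissible numbers of eta-oscillations: N such that there are points
  s \<le> a 0 < b 0 \<le> a 1 < b 1 \<le> ... \<le> a (N-1) < b (N-1) \<le> t with
  |x(b k) - x(a k)| > eta  (a k = t_{2k+1}, b k = t_{2k+2}).\<close>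
definition osc_counts :: "(real \<Rightarrow> real) \<Rightarrow> real \<Rightarrow> real \<Rightarrow> real \<Rightarrow> nat set" where
  "osc_counts x \<eta> s t = {N. \<exists>a b :: nat \<Rightarrow> real.
      (\<forall>k<N. s \<le> a k \<and> a k < b k \<and> b k \<le> t \<and> \<bar>x (b k) - x (a k)\<bar> > \<eta>) \<and>
      (\<forall>k. Suc k < N \<longrightarrow> b k \<le> a (Suc k))}"

text \<open>N_eta(x;[s,t]) as the supremum (in enat, so it may a priori be infinite)
  of the admissible counts; it is the largest such integer whenever that exists.\<close>
definition N_osc :: "(real \<Rightarrow> real) \<Rightarrow> real \<Rightarrow> real \<Rightarrow> real \<Rightarrow> enat" where
  "N_osc x \<eta> s t = Sup (enat ` osc_counts x \<eta> s t)"

end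

theory Submission imports Defs begin

lemma local_bdd:
  assumes c: "cadlag01 x" and t: "t \<in> {0..1}"
  shows "\<exists>d>0. \<exists>B. \<forall>y\<in>{0..1}. dist y t < d \<longrightarrow> \<bar>x y\<bar> \<le> B"
proof -
  have R: "\<exists>dr>0. \<forall>y\<in>{0..1}. t < y \<and> y < t + dr \<longrightarrow> \<bar>x y\<bar> \<le> \<bar>x t\<bar> + 1"
  proof (cases "t < 1")
    case True
    with c t have "(x \<longlongrightarrow> x t) (at_right t)" unfolding cadlag01_def by auto
    from tendstoD[OF this, of 1] obtain b where b: "b > t" "\<forall>y>t. y < b \<longrightarrow> dist (x y) (x t) < 1"
      unfolding eventually_at_right_field by auto
    show ?thesis
      apply (rule exI[of _ "b - t"]) using b by (auto simp: dist_real_def)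
  next
    case False
    then show ?thesis by (intro exI[of _ 1]) auto
  qed
  have L: "\<exists>dl>0. \<exists>l. \<forall>y\<in>{0..1}. t - dl < y \<and> y < t \<longrightarrow> \<bar>x y\<bar> \<le> \<bar>l\<bar> + 1"
  proof (cases "0 < t")
    case True
    from c t True obtain l where "(x \<longlongrightarrow> l) (at_left t)" unfolding cadlag01_def by force
    from tendstoD[OF this, of 1] obtain b where b: "b < t" "\<forall>y>b. y < t \<longrightarrow> dist (x y) l < 1"
      unfolding eventually_at_left_field by auto
    show ?thesis
      apply (rule exI[of _ "t - b"], rule conjI, use b in simp, rule exI[of _ l]) using b by (auto simp: dist_real_def)
  next
    case False
    then show ?thesis by (intro exI[of _ 1]) auto
  qed
  from R L obtain dr dl l where dr: "dr > 0" "\<forall>y\<in>{0..1}. t < y \<and> y < t + dr \<longrightarrow> \<bar>x y\<bar> \<le> \<bar>x t\<bar> + 1"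
    and dl: "dl > 0" "\<forall>y\<in>{0..1}. t - dl < y \<and> y < t \<longrightarrow> \<bar>x y\<bar> \<le> \<bar>l\<bar> + 1" by blast
  have "\<forall>y\<in>{0..1}. dist y t < min dr dl \<longrightarrow> \<bar>x y\<bar> \<le> max (\<bar>x t\<bar> + 1) (\<bar>l\<bar> + 1)"
  proof (intro ballI impI)
    fix y :: real assume y: "y \<in> {0..1}" "dist y t < min dr dl"
    consider "y < t" | "y = t" | "y > t" by linarith
    then show "\<bar>x y\<bar> \<le> max (\<bar>x t\<bar> + 1) (\<bar>l\<bar> + 1)"
    proof cases
      case 1
      with y have "t - dl < y" by (auto simp: dist_real_def)
      with 1 dl y have "\<bar>x y\<bar> \<le> \<bar>l\<bar> + 1" by auto
      then show ?thesis by linarith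
    next
      case 2 then show ?thesis by auto
    next
      case 3 with dr y show ?thesis by (auto simp: dist_real_def)
    qed
  qed
  then show ?thesis using dr dl by (intro exI[of _ "min dr dl"]) auto
qed

lemma cadlag_bdd:
  assumes c: "cadlag01 x"
  shows "\<exists>B. \<forall>y\<in>{0..1}. \<bar>x y\<bar> \<le> B"
proof -
  have "\<forall>t\<in>{0..1::real}. \<exists>d. d > 0 \<and> (\<exists>B. \<forall>y\<in>{0..1}. dist y t < d \<longrightarrow> \<bar>x y\<bar> \<le> B)"
    using local_bdd[OF c] by blast
  then obtain d where d: "\<And>t. t \<in> {0..1::real} \<Longrightarrow> d t > 0 \<and> (\<exists>B. \<forall>y\<in>{0..1}. dist y t < d t \<longrightarrow> \<bar>x y\<bar> \<le> B)"
    by metis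
  then obtain B where B: "\<And>t. t \<in> {0..1::real} \<Longrightarrow> d t > 0 \<and> (\<forall>y\<in>{0..1}. dist y t < d t \<longrightarrow> \<bar>x y\<bar> \<le> B t)"
    by metis
  have "{0..1::real} \<subseteq> (\<Union>c\<in>{0..1}. ball c (d c))"
    using B by fastforce
  then obtain C where C: "C \<subseteq> {0..1}" "finite C" "{0..1::real} \<subseteq> (\<Union>c\<in>C. ball c (d c))"
    using compactE_image[OF compact_Icc, of "{0..1}" "\<lambda>c. ball c (d c)" 0 1] by auto
  show ?thesis
  proof (intro exI[of _ "Max (insert 0 (B ` C))"] ballI)
    fix y :: real assume y: "y \<in> {0..1}"
    with C obtain c where c: "c \<in> C" "dist c y < d c" by auto
    with B C y have "\<bar>x y\<bar> \<le> B c" by (auto simp: dist_commute)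
    also have "B c \<le> Max (insert 0 (B ` C))" using C c by auto
    finally show "\<bar>x y\<bar> \<le> Max (insert 0 (B ` C))" .
  qed
qed

lemma H_nonneg: "H a b c \<ge> 0" by (simp add: H_def)
lemma H_neg: "H (-a) (-b) (-c) = H a b c" by (simp add: H_def max_def min_def)
lemma H_deg1: "H a a c = 0" by (simp add: H_def max_def min_def)
lemma H_deg2: "H a c c = 0" by (simp add: H_def max_def min_def)
lemma H1: "H a b c \<le> \<beta> \<Longrightarrow> b > a + \<beta> \<Longrightarrow> c \<ge> b - \<beta>"
  by (auto simp: H_def max_def min_def split: if_splits)
lemma H2: "H a b c \<le> \<beta> \<Longrightarrow> c > b + \<beta> \<Longrightarrow> b \<ge> a - \<beta>"
  by (auto simp: H_def max_def min_def split: if_splits)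
lemma ud: "H p q w \<le> \<beta> \<Longrightarrow> H q r w \<le> \<beta> \<Longrightarrow> q > p + \<eta> \<Longrightarrow> w < r - \<eta> \<Longrightarrow> \<eta> > 2*\<beta> \<Longrightarrow> False"
  by (auto simp: H_def max_def min_def split: if_splits)
lemma du: "H p q w \<le> \<beta> \<Longrightarrow> H q r w \<le> \<beta> \<Longrightarrow> q < p - \<eta> \<Longrightarrow> w > r + \<eta> \<Longrightarrow> \<eta> > 2*\<beta> \<Longrightarrow> False"
  by (auto simp: H_def max_def min_def split: if_splits)

lemma chain_up:
  fixes y :: "real \<Rightarrow> real" and a b :: "nat \<Rightarrow> real"
  assumes Hle: "\<And>u v w. s \<le> u \<Longrightarrow> u \<le> v \<Longrightarrow> v \<le> w \<Longrightarrow> w \<le> t \<Longrightarrow> H (y u) (y v) (y w) \<le> \<beta>"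
    and b0: "\<beta> \<ge> 0" and eta: "\<eta> > 2*\<beta>"
    and adm1: "\<forall>k<N. s \<le> a k \<and> a k < b k \<and> b k \<le> t"
    and adm2: "\<forall>k. Suc k < N \<longrightarrow> b k \<le> a (Suc k)"
    and up: "\<forall>k<N. y (b k) - y (a k) > \<eta>"
    and N: "N \<ge> 1"
  shows "real N * (\<eta> - \<beta>) \<le> y t - y s + \<beta>"
proof -
  have Q: "k < N \<Longrightarrow> y (b k) - y (a 0) \<ge> real (k+1) * \<eta> - real k * \<beta>" for k
  proof (induction k)
    case 0 then show ?case using up by force
  next
    case (Suc k)
    then have IH: "y (b k) - y (a 0) \<ge> real (k+1) * \<eta> - real k * \<beta>" by simp
    have f: "s \<le> a k" "a k < b k" "b k \<le> t" "s \<le> a (Suc k)" "a (Suc k) < b (Suc k)" "b (Suc k) \<le> t" "b k \<le> a (Suc k)"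
      using adm1 adm2 Suc.prems by (auto dest: spec[of _ k] spec[of _ "Suc k"])
    have h: "H (y (a k)) (y (b k)) (y (a (Suc k)))  \<le> \<beta>"
      apply (rule Hle) using f by linarith+
    have "y (b k) - y (a k) > \<eta>" using up Suc.prems by simp
    then have "y (b k) > y (a k) + \<beta>" using eta b0 by linarith
    from H1[OF h this] have "y (a (Suc k)) \<ge> y (b k) - \<beta>" .
    moreover have "y (b (Suc k)) - y (a (Suc k)) > \<eta>" using up Suc.prems by blast
    ultimately show ?case using IH by (simp add: algebra_simps)
  qed
  define m where "m = N - 1"
  have m: "m < N" "N = m + 1" using N by (auto simp: m_def)
  have q: "y (b m) - y (a 0) \<ge> real (m+1) * \<eta> - real m * \<beta>" using Q m by blast
  have ht: "H (y (a m)) (y (b m)) (y t) \<le> \<beta>" using Hle[of "a m" "b m" t] adm1 m by force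
  have "y (b m) > y (a m) + \<beta>" using up m eta b0 by force
  from H1[OF ht this] have t1: "y t \<ge> y (b m) - \<beta>" .
  have hs: "H (y s) (y (a 0)) (y (b 0)) \<le> \<beta>" using Hle[of s "a 0" "b 0"] adm1 m by force
  have "y (b 0) > y (a 0) + \<beta>" using up m eta b0 by force
  from H2[OF hs this] have s1: "y (a 0) \<ge> y s - \<beta>" .
  show ?thesis using q t1 s1 m by (simp add: algebra_simps)
qed

lemma same_sign:
  fixes x :: "real \<Rightarrow> real" and a b :: "nat \<Rightarrow> real"
  assumes Hle: "\<And>u v w. s \<le> u \<Longrightarrow> u \<le> v \<Longrightarrow> v \<le> w \<Longrightarrow> w \<le> t \<Longrightarrow> H (x u) (x v) (x w) \<le> \<beta>"
    and eta: "\<eta> > 2*\<beta>"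
    and adm1: "\<forall>k<N. s \<le> a k \<and> a k < b k \<and> b k \<le> t \<and> \<bar>x (b k) - x (a k)\<bar> > \<eta>"
    and adm2: "\<forall>k. Suc k < N \<longrightarrow> b k \<le> a (Suc k)"
  shows "k < N \<Longrightarrow> (x (b k) > x (a k)) = (x (b 0) > x (a 0))"
proof (induction k)
  case 0 then show ?case by simp
next
  case (Suc k)
  have f: "s \<le> a k" "a k < b k" "b k \<le> t" "s \<le> a (Suc k)" "a (Suc k) < b (Suc k)" "b (Suc k) \<le> t" "b k \<le> a (Suc k)"
    using adm1 adm2 Suc.prems by (auto dest: spec[of _ k] spec[of _ "Suc k"])
  have h1: "H (x (a k)) (x (b k)) (x (b (Suc k))) \<le> \<beta>"
    apply (rule Hle) using f by linarith+
  have h2: "H (x (b k)) (x (a (Suc k))) (x (b (Suc k))) \<le> \<beta>"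
    apply (rule Hle) using f by linarith+
  have k1: "\<bar>x (b k) - x (a k)\<bar> > \<eta>" "\<bar>x (b (Suc k)) - x (a (Suc k))\<bar> > \<eta>"
    using adm1 Suc.prems by auto
  have "(x (b (Suc k)) > x (a (Suc k))) = (x (b k) > x (a k))"
  proof (cases "x (b k) > x (a k)")
    case True
    then have "x (b k) > x (a k) + \<eta>" using k1 by auto
    moreover have "\<not> x (b (Suc k)) < x (a (Suc k)) - \<eta>" using ud[OF h1 h2 calculation _ eta] by blast
    ultimately show ?thesis using True k1 by auto
  next
    case False
    then have "x (b k) < x (a k) - \<eta>" using k1 by auto
    moreover have "\<not> x (b (Suc k)) > x (a (Suc k)) + \<eta>" using du[OF h1 h2 calculation _ eta] by blast
    ultimately show ?thesis using False k1 by auto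
  qed
  then show ?case using Suc by simp
qed

lemma count_bound:
  fixes x :: "real \<Rightarrow> real"
  assumes Hle: "\<And>u v w. s \<le> u \<Longrightarrow> u \<le> v \<Longrightarrow> v \<le> w \<Longrightarrow> w \<le> t \<Longrightarrow> H (x u) (x v) (x w) \<le> \<beta>"
    and b0: "\<beta> \<ge> 0" and eta: "\<eta> > 2*\<beta>"
    and NN: "N \<in> osc_counts x \<eta> s t"
  shows "real N * (\<eta> - \<beta>) \<le> \<bar>x t - x s\<bar> + \<beta>"
proof (cases "N = 0")
  case True then show ?thesis using b0 by simp
next
  case False
  from NN obtain a b where adm1: "\<forall>k<N. s \<le> a k \<and> a k < b k \<and> b k \<le> t \<and> \<bar>x (b k) - x (a k)\<bar> > \<eta>"
    and adm2: "\<forall>k. Suc k < N \<longrightarrow> b k \<le> a (Suc k)" unfolding osc_counts_def by blast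
  have ss: "k < N \<Longrightarrow> (x (b k) > x (a k)) = (x (b 0) > x (a 0))" for k
    using same_sign[OF Hle eta adm1 adm2] by blast
  have a1: "\<forall>k<N. s \<le> a k \<and> a k < b k \<and> b k \<le> t" using adm1 by blast
  show ?thesis
  proof (cases "x (b 0) > x (a 0)")
    case True
    have "\<forall>k<N. x (b k) - x (a k) > \<eta>" using ss True adm1 by fastforce
    from chain_up[OF Hle b0 eta a1 adm2 this] False show ?thesis by simp
  next
    case F: False
    have Hle': "H ((\<lambda>z. - x z) u) ((\<lambda>z. - x z) v) ((\<lambda>z. - x z) w) \<le> \<beta>"
      if "s \<le> u" "u \<le> v" "v \<le> w" "w \<le> t" for u v w
      using Hle[OF that] by (simp add: H_neg)
    have "\<forall>k<N. (\<lambda>z. - x z) (b k) - (\<lambda>z. - x z) (a k) > \<eta>" using ss F adm1 by fastforce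
    from chain_up[of s t "\<lambda>z. - x z", OF Hle' b0 eta a1 adm2 this] False show ?thesis by simp
  qed
qed

lemma H_le: "\<bar>a\<bar> \<le> B \<Longrightarrow> \<bar>b\<bar> \<le> B \<Longrightarrow> \<bar>c\<bar> \<le> B \<Longrightarrow> H a b c \<le> 2*B"
  by (auto simp: H_def max_def min_def abs_if split: if_splits)

lemma Sup_enat_finite:
  assumes "finite S" "S \<noteq> {}"
  shows "Sup (enat ` S) = enat (Max S)"
proof (rule antisym)
  show "Sup (enat ` S) \<le> enat (Max S)" using assms by (auto intro!: Sup_least)
  show "enat (Max S) \<le> Sup (enat ` S)" using assms by (intro Sup_upper) auto
qed

theorem lemma5:
  fixes x :: "real \<Rightarrow> real" and s t \<eta> \<beta> :: real
  assumes "cadlag01 x"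
    and "0 \<le> s" and "s < t" and "t \<le> 1"
    and "\<beta> = (SUP (u, v, w) \<in> {(u, v, w). s \<le> u \<and> u < v \<and> v < w \<and> w \<le> t}.
                 H (x u) (x v) (x w))"
    and "\<eta> > 2 * \<beta>"
  shows "N_osc x \<eta> s t \<noteq> \<infinity> \<and>
         real (the_enat (N_osc x \<eta> s t)) \<le> (\<bar>x t - x s\<bar> + \<beta>) / (\<eta> - \<beta>)"
proof -
  obtain B where B: "\<And>y. y \<in> {0..1} \<Longrightarrow> \<bar>x y\<bar> \<le> B" using cadlag_bdd[OF assms(1)] by blast
  define A where "A = {(u, v, w). s \<le> u \<and> u < v \<and> v < w \<and> w \<le> (t::real)}"
  define f where "f = (\<lambda>(u, v, w). H (x u) (x v) (x w))"
  have beta: "\<beta> = Sup (f ` A)" using assms(5) unfolding A_def f_def by simp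
  have bdd: "bdd_above (f ` A)"
  proof (rule bdd_aboveI)
    fix z assume "z \<in> f ` A"
    then obtain u v w where "z = H (x u) (x v) (x w)" "s \<le> u" "u < v" "v < w" "w \<le> t"
      unfolding A_def f_def by auto
    moreover have "\<bar>x u\<bar> \<le> B" "\<bar>x v\<bar> \<le> B" "\<bar>x w\<bar> \<le> B"
      using calculation assms(2,4) by (intro B; auto)+
    ultimately show "z \<le> 2 * B" using H_le by simp
  qed
  have up: "H (x u) (x v) (x w) \<le> \<beta>" if "s \<le> u" "u < v" "v < w" "w \<le> t" for u v w
  proof -
    have "(u, v, w) \<in> A" using that unfolding A_def by auto
    from cSUP_upper[OF this bdd] show ?thesis unfolding beta f_def by simp
  qed
  have b0: "\<beta> \<ge> 0"
  proof -
    have "H (x s) (x ((s+t)/2)) (x t) \<le> \<beta>" using assms(3) by (intro up) auto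
    then show ?thesis using H_nonneg[of "x s" "x ((s+t)/2)" "x t"] by linarith
  qed
  have Hle: "H (x u) (x v) (x w) \<le> \<beta>" if "s \<le> u" "u \<le> v" "v \<le> w" "w \<le> t" for u v w
  proof (cases "u = v")
    case True then show ?thesis using b0 by (simp add: H_deg1)
  next
    case False
    show ?thesis
    proof (cases "v = w")
      case True then show ?thesis using b0 by (simp add: H_deg2)
    next
      case False
      with \<open>u \<noteq> v\<close> that show ?thesis by (intro up) auto
    qed
  qed
  define M where "M = (\<bar>x t - x s\<bar> + \<beta>) / (\<eta> - \<beta>)"
  have pos: "\<eta> - \<beta> > 0" using assms(6) b0 by linarith
  have bnd: "real N \<le> M" if "N \<in> osc_counts x \<eta> s t" for N
    using count_bound[OF Hle b0 assms(6) that] pos unfolding M_def by (simp add: field_simps)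
  let ?S = "osc_counts x \<eta> s t"
  have sub: "?S \<subseteq> {..nat \<lceil>M\<rceil>}"
  proof
    fix N assume "N \<in> ?S"
    from bnd[OF this] have "real N \<le> M" .
    then show "N \<in> {..nat \<lceil>M\<rceil>}" by (simp add: le_nat_iff le_ceiling_iff)
  qed
  have fin: "finite ?S" using finite_subset[OF sub] by simp
  have ne: "0 \<in> ?S" unfolding osc_counts_def by auto
  have eq: "N_osc x \<eta> s t = enat (Max ?S)"
    unfolding N_osc_def using Sup_enat_finite[OF fin] ne by blast
  have "Max ?S \<in> ?S" using fin ne by (intro Max_in) auto
  from bnd[OF this] show ?thesis unfolding eq M_def by simp
qed

end
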